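(* Let $\mathcal{C}$ be the split Cayley algebra over a field $\mathbb{F}$ with norm $\mathrm{n}$. Then every $2$-local automorphism of $\mathcal{C}$ is an automorphism; that is, the set of $2$-local automorphisms of $\mathcal{C}$ equals $\mathrm{Aut}(\mathcal{C})$.
   Context: A Cayley (octonion) algebra over $\mathbb{F}$ is a unital nonassociative algebra $\mathcal{C}$ of dimension $8$ over $\mathbb{F}$ endowed with a quadratic form $\mathrm{n}:\mathcal{C}\to\mathbb{F}$ (the norm) such that $\mathrm{n}(xy)=\mathrm{n}(x)\mathrm{n}(y)$ for all $x,y$ and whose polar form $\mathrm{n}(x,y)=\mathrm{n}(x+y)-\mathrm{n}(x)-\mathrm{n}(y)$ is nondegenerate. The split Cayley algebra is the (unique up to isomorphism) Cayley algebra whose norm is isotropic, i.e. $\mathrm{n}(x)=0$ for some $x\neq 0$. A map $\Delta:\mathcal{C}\to\mathcal{C}$ (not assumed linear) is a $2$-local automorphism if for every pair $x,y\in\mathcal{C}$ there is an algebra automorphism $\varphi_{x,y}$ of $\mathcal{C}$ with $\Delta(x)=\varphi_{x,y}(x)$ and $\Delta(y)=\varphi_{x,y}(y)$. *)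

theory Defs
  imports Complex_Main
begin

definition bilinear_map ::
  "('a::field \<Rightarrow> 'v::ab_group_add \<Rightarrow> 'v) \<Rightarrow> ('v \<Rightarrow> 'v \<Rightarrow> 'v) \<Rightarrow> bool" where
  "bilinear_map scl mul \<longleftrightarrow>
     (\<forall>x. Vector_Spaces.linear scl scl (\<lambda>y. mul x y)) \<and> (\<forall>y. Vector_Spaces.linear scl scl (\<lambda>x. mul x y))"

definition polar :: "('v::ab_group_add \<Rightarrow> 'a::field) \<Rightarrow> 'v \<Rightarrow> 'v \<Rightarrow> 'a" where
  "polar nrm x y = nrm (x + y) - nrm x - nrm y"

definition quadratic_form ::
  "('a::field \<Rightarrow> 'v::ab_group_add \<Rightarrow> 'v) \<Rightarrow> ('v \<Rightarrow> 'a) \<Rightarrow> bool" where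
  "quadratic_form scl nrm \<longleftrightarrow>
     (\<forall>c x. nrm (scl c x) = c ^ 2 * nrm x) \<and>
     (\<forall>x. Vector_Spaces.linear scl (*) (\<lambda>y. polar nrm x y)) \<and>
     (\<forall>y. Vector_Spaces.linear scl (*) (\<lambda>x. polar nrm x y))"

definition cayley_algebra ::
  "('a::field \<Rightarrow> 'v::ab_group_add \<Rightarrow> 'v) \<Rightarrow> ('v \<Rightarrow> 'v \<Rightarrow> 'v) \<Rightarrow> 'v \<Rightarrow> ('v \<Rightarrow> 'a) \<Rightarrow> bool" where
  "cayley_algebra scl mul e nrm \<longleftrightarrow>
     vector_space scl \<and>
     vector_space.dim scl (UNIV :: 'v set) = 8 \<and>
     bilinear_map scl mul \<and>
     (\<forall>x. mul e x = x \<and> mul x e = x) \<and>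
     quadratic_form scl nrm \<and>
     (\<forall>x y. nrm (mul x y) = nrm x * nrm y) \<and>
     (\<forall>x. (\<forall>y. polar nrm x y = 0) \<longrightarrow> x = 0)"

definition split_cayley_algebra ::
  "('a::field \<Rightarrow> 'v::ab_group_add \<Rightarrow> 'v) \<Rightarrow> ('v \<Rightarrow> 'v \<Rightarrow> 'v) \<Rightarrow> 'v \<Rightarrow> ('v \<Rightarrow> 'a) \<Rightarrow> bool" where
  "split_cayley_algebra scl mul e nrm \<longleftrightarrow>
     cayley_algebra scl mul e nrm \<and> (\<exists>x. x \<noteq> 0 \<and> nrm x = 0)"

definition algebra_aut ::
  "('a::field \<Rightarrow> 'v::ab_group_add \<Rightarrow> 'v) \<Rightarrow> ('v \<Rightarrow> 'v \<Rightarrow> 'v) \<Rightarrow> 'v \<Rightarrow> ('v \<Rightarrow> 'v) set" where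
  "algebra_aut scl mul e =
     {\<phi>. Vector_Spaces.linear scl scl \<phi> \<and> bij \<phi> \<and> (\<forall>x y. \<phi> (mul x y) = mul (\<phi> x) (\<phi> y)) \<and> \<phi> e = e}"

definition two_local_aut ::
  "('a::field \<Rightarrow> 'v::ab_group_add \<Rightarrow> 'v) \<Rightarrow> ('v \<Rightarrow> 'v \<Rightarrow> 'v) \<Rightarrow> 'v \<Rightarrow> ('v \<Rightarrow> 'v) \<Rightarrow> bool" where
  "two_local_aut scl mul e \<Delta> \<longleftrightarrow>
     (\<forall>x y. \<exists>\<phi>\<in>algebra_aut scl mul e. \<Delta> x = \<phi> x \<and> \<Delta> y = \<phi> y)"

end

theory Submission
  imports Defs
begin

lemma two_ne_one: "(2::'a::field) \<noteq> 1"
proof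
  assume "(2::'a) = 1"
  hence "(1::'a) = 1 + 1" by (simp add: one_add_one)
  hence "(1::'a) = 0" by (metis add_cancel_left_right)
  thus False by simp
qed

locale cayley =
  fixes scl :: "'a::field \<Rightarrow> 'v::ab_group_add \<Rightarrow> 'v" (infixr "*s" 75)
    and mul :: "'v \<Rightarrow> 'v \<Rightarrow> 'v" (infixl "\<star>" 70) and e :: 'v and nrm :: "'v \<Rightarrow> 'a"
  assumes cay: "cayley_algebra scl mul e nrm"
begin

sublocale vs: vector_space scl using cay by (simp add: cayley_algebra_def)

abbreviation P where "P \<equiv> polar nrm"
abbreviation tr where "tr x \<equiv> P x e"

lemma bil: "bilinear_map scl mul" using cay by (simp add: cayley_algebra_def)
lemma qf: "quadratic_form scl nrm" using cay by (simp add: cayley_algebra_def)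
lemma unit_l[simp]: "e \<star> x = x" using cay by (simp add: cayley_algebra_def)
lemma unit_r[simp]: "x \<star> e = x" using cay by (simp add: cayley_algebra_def)
lemma nmult: "nrm (x \<star> y) = nrm x * nrm y" using cay by (simp add: cayley_algebra_def)
lemma nondeg: "(\<And>y. P x y = 0) \<Longrightarrow> x = 0" using cay by (simp add: cayley_algebra_def)
lemma dim8: "vs.dim UNIV = 8" using cay by (simp add: cayley_algebra_def)

lemma lin_r: "Vector_Spaces.linear scl scl (\<lambda>y. x \<star> y)"
  using bil unfolding bilinear_map_def by blast
lemma lin_l: "Vector_Spaces.linear scl scl (\<lambda>x. x \<star> y)"
  using bil unfolding bilinear_map_def by blast
lemma mul_add_r: "x \<star> (y + z) = x \<star> y + x \<star> z"
  using lin_r[of x, unfolded Vector_Spaces.linear_iff, THEN conjunct2, THEN conjunct2] by simp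
lemma mul_add_l: "(x + y) \<star> z = x \<star> z + y \<star> z"
  using lin_l[of z, unfolded Vector_Spaces.linear_iff, THEN conjunct2, THEN conjunct2] by simp
lemma mul_scl_r: "x \<star> (c *s y) = c *s (x \<star> y)"
  using lin_r[of x, unfolded Vector_Spaces.linear_iff, THEN conjunct2, THEN conjunct2] by simp
lemma mul_scl_l: "(c *s x) \<star> y = c *s (x \<star> y)"
  using lin_l[of y, unfolded Vector_Spaces.linear_iff, THEN conjunct2, THEN conjunct2] by simp
lemma mul_0_r[simp]: "x \<star> 0 = 0"
  using mul_add_r[of x 0 0] by simp
lemma mul_0_l[simp]: "0 \<star> x = 0"
  using mul_add_l[of 0 0 x] by simp
lemma mul_neg_r: "x \<star> (- y) = - (x \<star> y)"
proof -
  have "x \<star> y + x \<star> (-y) = 0" using mul_add_r[of x y "-y"] by simp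
  from add.inverse_unique[OF this] show ?thesis by simp
qed
lemma mul_neg_l: "(- x) \<star> y = - (x \<star> y)"
proof -
  have "x \<star> y + (-x) \<star> y = 0" using mul_add_l[of x "-x" y] by simp
  from add.inverse_unique[OF this] show ?thesis by simp
qed
lemma mul_diff_r: "x \<star> (y - z) = x \<star> y - x \<star> z"
  unfolding diff_conv_add_uminus by (simp only: mul_add_r mul_neg_r)
lemma mul_diff_l: "(x - y) \<star> z = x \<star> z - y \<star> z"
  unfolding diff_conv_add_uminus by (simp only: mul_add_l mul_neg_l)

lemmas mul_simps = mul_add_r mul_add_l mul_scl_r mul_scl_l mul_neg_r mul_neg_l mul_diff_r mul_diff_l

lemma Plin_r: "Vector_Spaces.linear scl (*) (\<lambda>y. P x y)"
  using qf unfolding quadratic_form_def by blast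
lemma Plin_l: "Vector_Spaces.linear scl (*) (\<lambda>x. P x y)"
  using qf unfolding quadratic_form_def by blast
lemma P_add_r: "P x (y + z) = P x y + P x z"
  using Plin_r[of x, unfolded Vector_Spaces.linear_iff, THEN conjunct2, THEN conjunct2] by simp
lemma P_add_l: "P (x + y) z = P x z + P y z"
  using Plin_l[of z, unfolded Vector_Spaces.linear_iff, THEN conjunct2, THEN conjunct2] by simp
lemma P_scl_r: "P x (c *s y) = c * P x y"
  using Plin_r[of x, unfolded Vector_Spaces.linear_iff, THEN conjunct2, THEN conjunct2] by simp
lemma P_scl_l: "P (c *s x) y = c * P x y"
  using Plin_l[of y, unfolded Vector_Spaces.linear_iff, THEN conjunct2, THEN conjunct2] by simp
lemma P_0_r[simp]: "P x 0 = 0"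
  using P_scl_r[of x 0 0] by simp
lemma P_0_l[simp]: "P 0 x = 0"
  using P_scl_l[of 0 0 x] by simp
lemma P_neg_r: "P x (- y) = - P x y"
proof -
  have "P x y + P x (-y) = 0" using P_add_r[of x y "-y"] by simp
  from add.inverse_unique[OF this] show ?thesis by simp
qed
lemma P_neg_l: "P (- x) y = - P x y"
proof -
  have "P x y + P (-x) y = 0" using P_add_l[of x "-x" y] by simp
  from add.inverse_unique[OF this] show ?thesis by simp
qed
lemma P_diff_r: "P x (y - z) = P x y - P x z"
  unfolding diff_conv_add_uminus by (simp only: P_add_r P_neg_r)
lemma P_diff_l: "P (x - y) z = P x z - P y z"
  unfolding diff_conv_add_uminus by (simp only: P_add_l P_neg_l)
lemma P_sym: "P x y = P y x"
  unfolding polar_def by (simp add: add.commute)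

lemmas P_simps = P_add_r P_add_l P_scl_r P_scl_l P_neg_r P_neg_l P_diff_r P_diff_l

lemma n_scl: "nrm (c *s x) = c^2 * nrm x"
  using qf by (simp add: quadratic_form_def)
lemma n_0[simp]: "nrm 0 = 0"
  using n_scl[of 0 0] by simp
lemma n_add: "nrm (x + y) = nrm x + nrm y + P x y"
  by (simp add: polar_def)
lemma n_neg: "nrm (- x) = nrm x"
  using n_scl[of "-1" x] by (simp add: vs.scale_minus_left)
lemma P_self: "P x x = 2 * nrm x"
proof -
  have "x + x = 2 *s x" using vs.scale_left_distrib[of 1 1 x] by (simp add: one_add_one)
  then show ?thesis by (simp add: polar_def n_scl power2_eq_square)
qed


lemma UNIV_zero_dim: assumes "\<And>x::'v. x = 0" shows False
proof -
  have "vs.span {} = vs.span (UNIV::'v set)"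
    using assms by (auto simp: vs.span_empty)
  from vs.dim_eq_card[OF this vs.independent_empty] dim8 show False by simp
qed

lemma n_e[simp]: "nrm e = 1"
proof -
  have h: "nrm e = nrm e * nrm e" using nmult[of e e] by simp
  have "nrm e \<noteq> 0"
  proof
    assume z: "nrm e = 0"
    have "nrm x = 0" for x using nmult[of x e] z by simp
    hence h: "\<And>x y. P x y = 0" by (simp add: polar_def)
    have "x = 0" for x :: 'v using nondeg h by blast
    thus False by (rule UNIV_zero_dim)
  qed
  with h show ?thesis by (metis mult_cancel_left1)
qed

lemma e_ne0[simp]: "e \<noteq> 0"
  using n_e n_0 by force

lemma tr_e[simp]: "tr e = 2" using P_self[of e] by simp

lemma K1: "P (x\<star>y) (x\<star>z) = nrm x * P y z"
proof -
  have "nrm (x\<star>(y+z)) = nrm x * nrm (y+z)" by (rule nmult)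
  thus ?thesis by (simp add: mul_add_r n_add nmult algebra_simps)
qed

lemma K1r: "P (y\<star>x) (z\<star>x) = nrm x * P y z"
proof -
  have "nrm ((y+z)\<star>x) = nrm (y+z) * nrm x" by (rule nmult)
  thus ?thesis by (simp add: mul_add_l n_add nmult algebra_simps)
qed

lemma K2: "P (x\<star>y) (w\<star>z) + P (w\<star>y) (x\<star>z) = P x w * P y z"
proof -
  have "P ((x+w)\<star>y) ((x+w)\<star>z) = nrm (x+w) * P y z" by (rule K1)
  thus ?thesis by (simp add: mul_add_l P_add_l P_add_r K1 n_add algebra_simps P_sym[of w x])
qed

lemma K2r: "P (y\<star>x) (z\<star>w) + P (y\<star>w) (z\<star>x) = P x w * P y z"
proof -
  have "P (y\<star>(x+w)) (z\<star>(x+w)) = nrm (x+w) * P y z" by (rule K1r)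
  thus ?thesis by (simp add: mul_add_r P_add_l P_add_r K1r n_add algebra_simps P_sym[of w x])
qed

lemma K3: "P (x\<star>y) z + P y (x\<star>z) = tr x * P y z"
  using K2[of x y e z] by simp

lemma K3r: "P (y\<star>x) z + P y (z\<star>x) = tr x * P y z"
  using K2r[where x=x and y=y and z=z and w=e] by simp

lemma eq_by_P: assumes "\<And>z. P x z = P y z" shows "x = y"
proof -
  have "P (x - y) z = 0" for z using assms[of z] by (simp add: P_diff_l)
  hence "x - y = 0" by (rule nondeg)
  thus ?thesis by simp
qed

lemma Q: "x\<star>x = tr x *s x - nrm x *s e"
proof (rule eq_by_P)
  fix z
  have "P (x\<star>x) z + P x (x\<star>z) = tr x * P x z" by (rule K3)
  moreover have "P x (x\<star>z) = nrm x * P e z" using K1[of x e z] by simp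
  ultimately show "P (x\<star>x) z = P (tr x *s x - nrm x *s e) z"
    by (simp add: P_diff_l P_scl_l eq_diff_eq)
qed

lemma Qlin: "x\<star>y + y\<star>x = tr x *s y + tr y *s x - P x y *s e"
proof -
  have "(x+y)\<star>(x+y) = tr (x+y) *s (x+y) - nrm (x+y) *s e" by (rule Q)
  hence "x\<star>x + y\<star>y + (x\<star>y + y\<star>x) = tr (x+y) *s (x+y) - nrm (x+y) *s e"
    by (simp add: mul_add_l mul_add_r algebra_simps)
  also have "\<dots> = (tr x *s x - nrm x *s e) + (tr y *s y - nrm y *s e) + (tr x *s y + tr y *s x - P x y *s e)"
    by (simp add: P_add_l n_add algebra_simps)
  finally show ?thesis using Q[of x] Q[of y] by simp
qed

definition cj where "cj x = tr x *s e - x"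

lemma cj_mul: "cj x \<star> z = tr x *s z - x \<star> z"
  by (simp add: cj_def mul_diff_l mul_scl_l)
lemma mul_cj: "z \<star> cj x = tr x *s z - z \<star> x"
  by (simp add: cj_def mul_diff_r mul_scl_r)

lemma C1: "P (x\<star>y) z = P y (cj x \<star> z)"
  using K3[of x y z] by (simp add: cj_mul P_diff_r P_scl_r algebra_simps)
lemma C1r: "P (y\<star>x) z = P y (z \<star> cj x)"
  using K3r[of y x z] by (simp add: mul_cj P_diff_r P_scl_r algebra_simps)

lemma tr_cj: "tr (cj x) = tr x"
proof -
  have "tr (cj x) = tr x * tr e - tr x" unfolding cj_def by (simp only: P_diff_l P_scl_l)
  thus ?thesis by simp
qed
lemma cj_cj[simp]: "cj (cj x) = x"
proof -
  have "cj (cj x) = tr (cj x) *s e - cj x" by (rule cj_def)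
  also have "\<dots> = tr x *s e - cj x" by (simp only: tr_cj)
  finally show ?thesis by (simp add: cj_def)
qed

lemma A1: "cj x \<star> (x\<star>y) = nrm x *s y"
proof (rule eq_by_P)
  fix z
  have "P (cj x \<star> (x\<star>y)) z = P (x\<star>y) (x \<star> z)" using C1[of "cj x" "x\<star>y" z] by simp
  also have "\<dots> = P (nrm x *s y) z" by (simp add: K1 P_scl_l)
  finally show "P (cj x \<star> (x\<star>y)) z = P (nrm x *s y) z" .
qed

lemma A1r: "(y\<star>x) \<star> cj x = nrm x *s y"
proof (rule eq_by_P)
  fix z
  have "P ((y\<star>x) \<star> cj x) z = P (y\<star>x) (z \<star> x)" using C1r[of "y\<star>x" "cj x" z] by simp
  also have "\<dots> = P (nrm x *s y) z" by (simp add: K1r P_scl_l)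
  finally show "P ((y\<star>x) \<star> cj x) z = P (nrm x *s y) z" .
qed

lemma LA: "x \<star> (x \<star> y) = (x \<star> x) \<star> y"
  using A1[of x y] by (simp add: cj_mul Q mul_diff_l mul_scl_l algebra_simps)

lemma RA: "(y \<star> x) \<star> x = y \<star> (x \<star> x)"
  using A1r[of y x] by (simp add: mul_cj Q mul_diff_r mul_scl_r algebra_simps)

lemma LAlin: "x\<star>(y\<star>z) + y\<star>(x\<star>z) = (x\<star>y)\<star>z + (y\<star>x)\<star>z"
  using LA[of "x+y" z] LA[of x z] LA[of y z] by (simp add: mul_add_l mul_add_r algebra_simps)

lemma RAlin: "(z\<star>x)\<star>y + (z\<star>y)\<star>x = z\<star>(x\<star>y) + z\<star>(y\<star>x)"
  using RA[of z "x+y"] RA[of z x] RA[of z y] by (simp add: mul_add_l mul_add_r algebra_simps)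

lemma flex: "x\<star>(y\<star>x) = (x\<star>y)\<star>x"
  using LAlin[of x y x] RA[of y x] by simp


lemma P_sum_l: "P (sum g A) z = (\<Sum>a\<in>A. P (g a) z)"
  by (induct A rule: infinite_finite_induct) (simp_all add: P_add_l)

lemma aut_D:
  assumes "\<phi> \<in> algebra_aut scl mul e"
  shows "\<phi> (x + y) = \<phi> x + \<phi> y" "\<phi> (c *s x) = c *s \<phi> x" "\<phi> (x \<star> y) = \<phi> x \<star> \<phi> y"
    "\<phi> e = e" "inj \<phi>"
  using assms unfolding algebra_aut_def Vector_Spaces.linear_iff by (auto simp: bij_def)

lemma aut_diff: assumes "\<phi> \<in> algebra_aut scl mul e" shows "\<phi> (x - y) = \<phi> x - \<phi> y"
proof -
  have "\<phi> (x - y) + \<phi> y = \<phi> x" using aut_D(1)[OF assms, of "x-y" y] by simp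
  thus ?thesis by (simp add: eq_diff_eq)
qed

lemma aut_n:
  assumes a: "\<phi> \<in> algebra_aut scl mul e"
  shows "nrm (\<phi> x) = nrm x"
proof -
  have "\<phi> (x \<star> x) = tr x *s \<phi> x - nrm x *s e"
    by (simp add: Q aut_diff[OF a] aut_D[OF a])
  moreover have "\<phi> (x \<star> x) = tr (\<phi> x) *s \<phi> x - nrm (\<phi> x) *s e"
    unfolding aut_D(3)[OF a] by (rule Q)
  ultimately have eq: "(tr x - tr (\<phi> x)) *s \<phi> x = (nrm x - nrm (\<phi> x)) *s e"
    by (simp add: algebra_simps)
  show ?thesis
  proof (cases "tr x = tr (\<phi> x)")
    case True
    with eq have "(nrm x - nrm (\<phi> x)) *s e = 0" by simp
    thus ?thesis by simp
  next
    case False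
    define c where "c = (nrm x - nrm (\<phi> x)) / (tr x - tr (\<phi> x))"
    have "\<phi> x = c *s e"
    proof -
      have "(1 / (tr x - tr (\<phi> x))) *s ((tr x - tr (\<phi> x)) *s \<phi> x) = \<phi> x"
        using False by simp
      with eq show ?thesis by (simp add: c_def)
    qed
    also have "\<dots> = \<phi> (c *s e)" by (simp add: aut_D[OF a])
    finally have "x = c *s e" using aut_D(5)[OF a] by (simp add: inj_eq)
    hence "\<phi> x = x" by (simp add: aut_D[OF a])
    with False show ?thesis by simp
  qed
qed

lemma aut_P: assumes a: "\<phi> \<in> algebra_aut scl mul e" shows "P (\<phi> x) (\<phi> y) = P x y"
  using aut_n[OF a, of "x+y"] aut_n[OF a, of x] aut_n[OF a, of y]
  by (simp add: polar_def aut_D[OF a])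


definition idem where "idem r \<longleftrightarrow> r \<star> r = r \<and> nrm r = 0 \<and> tr r = 1"

lemma idemD: assumes "idem r" shows "r \<star> r = r" "nrm r = 0" "tr r = 1"
  using assms by (auto simp: idem_def)

lemma idem_compl: assumes "idem r" shows "idem (e - r)"
proof -
  note h = idemD[OF assms]
  have "(e - r) \<star> (e - r) = e - r" using h by (simp add: mul_diff_l mul_diff_r)
  moreover have "nrm (e - r) = 0"
  proof -
    have "nrm (e - r) = nrm e + nrm (- r) + P e (- r)" using n_add[of e "-r"] by simp
    also have "\<dots> = 0" using h by (simp add: n_neg P_neg_r P_sym[of e r])
    finally show ?thesis .
  qed
  moreover have "tr (e - r) = 1" using h by (simp add: P_diff_l)
  ultimately show ?thesis by (simp add: idem_def)
qed

lemma idem_not_scalar: assumes "idem r" shows "r \<noteq> c *s e"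
proof
  assume r: "r = c *s e"
  note h = idemD[OF assms]
  have "(c * c) *s e = c *s e" using h(1) r by (simp add: mul_scl_l mul_scl_r)
  hence "c * c = c" by simp
  hence "c = 0 \<or> c = 1" by (metis mult_cancel_right1 mult_eq_0_iff eq_iff_diff_eq_0 mult.commute right_diff_distrib mult.right_neutral)
  moreover have "c * 2 = 1" using h(3) r by (simp add: P_scl_l)
  ultimately show False using two_ne_one by auto
qed

lemma idem_ne0: assumes "idem r" shows "r \<noteq> 0"
  using idem_not_scalar[OF assms, of 0] by simp

lemma C11: assumes r: "idem r" and z: "r \<star> z = z" "z \<star> r = z" shows "z = tr z *s r"
proof -
  note h = idemD[OF r]
  have "r \<star> z + z \<star> r = tr r *s z + tr z *s r - P r z *s e" by (rule Qlin)
  hence z1: "z = tr z *s r - P r z *s e" using z h by (simp add: algebra_simps)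
  have "(e - r) \<star> z = 0" using z by (simp add: mul_diff_l)
  moreover have "(e - r) \<star> z = tr z *s ((e - r) \<star> r) - P r z *s (e - r)"
    by (subst z1) (simp add: mul_diff_r mul_scl_r mul_diff_l)
  moreover have "(e - r) \<star> r = 0" using h by (simp add: mul_diff_l)
  ultimately have "P r z *s (e - r) = 0" by simp
  moreover have "e - r \<noteq> 0" using idem_ne0[OF idem_compl[OF r]] .
  ultimately have "P r z = 0" by simp
  with z1 show ?thesis by simp
qed

lemma C12: assumes r: "idem r" and z: "r \<star> z = z" "z \<star> r = 0" shows "z \<star> z = 0"
proof -
  note h = idemD[OF r]
  have "r \<star> z + z \<star> r = tr r *s z + tr z *s r - P r z *s e" by (rule Qlin)
  hence z1: "tr z *s r = P r z *s e" using z h by (simp add: algebra_simps)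
  have "tr z = 0"
  proof (rule ccontr)
    assume "tr z \<noteq> 0"
    hence "r = (P r z / tr z) *s e" using z1
      by (metis vs.scale_scale vs.scale_one divide_inverse_commute field_class.field_inverse
          mult.commute)
    with idem_not_scalar[OF r] show False by blast
  qed
  moreover have "nrm z = 0" using nmult[of r z] z h by simp
  ultimately show ?thesis by (simp add: Q)
qed

lemma peirce: assumes r: "idem r"
  obtains a b u v where "z = a *s r + b *s (e - r) + u + v"
    "r \<star> u = u" "u \<star> r = 0" "r \<star> v = 0" "v \<star> r = v"
proof -
  note h = idemD[OF r]
  have la: "r \<star> (r \<star> z) = r \<star> z" using LA[of r z] h by simp
  have ra: "(z \<star> r) \<star> r = z \<star> r" using RA[of z r] h by simp
  have fl: "r \<star> (z \<star> r) = (r \<star> z) \<star> r" by (rule flex)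
  define z11 where "z11 = (r \<star> z) \<star> r"
  define z12 where "z12 = r \<star> z - z11"
  define z21 where "z21 = z \<star> r - z11"
  define z22 where "z22 = z - r \<star> z - z \<star> r + z11"
  have a1: "r \<star> z11 = z11" unfolding z11_def using flex[of r "r \<star> z"] la by simp
  have a2: "z11 \<star> r = z11" unfolding z11_def using RA[of "r \<star> z" r] h by simp
  have e11: "z11 = tr z11 *s r" by (rule C11[OF r a1 a2])
  have b1: "r \<star> z22 = 0" unfolding z22_def using la fl a1 by (simp add: mul_add_r mul_diff_r z11_def)
  have b2: "z22 \<star> r = 0" unfolding z22_def using ra a2 by (simp add: mul_add_l mul_diff_l z11_def)
  have b1': "(e - r) \<star> z22 = z22" using b1 by (simp add: mul_diff_l)
  have b2': "z22 \<star> (e - r) = z22" using b2 by (simp add: mul_diff_r)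
  have e22: "z22 = tr z22 *s (e - r)" by (rule C11[OF idem_compl[OF r] b1' b2'])
  have c1: "r \<star> z12 = z12" unfolding z12_def using la a1 by (simp add: mul_diff_r)
  have c2: "z12 \<star> r = 0" unfolding z12_def using a2 by (simp add: mul_diff_l z11_def)
  have d1: "r \<star> z21 = 0" unfolding z21_def mul_diff_r a1 using fl by (simp add: z11_def)
  have d2: "z21 \<star> r = z21" unfolding z21_def using ra a2 by (simp add: mul_diff_l)
  have "z = z11 + z22 + z12 + z21" by (simp add: z12_def z21_def z22_def)
  hence "z = tr z11 *s r + tr z22 *s (e - r) + z12 + z21" using e11 e22 by simp
  thus ?thesis using that c1 c2 d1 d2 by blast
qed

lemma idem_exists: assumes "x \<noteq> 0" "nrm x = 0" shows "\<exists>r. idem r"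
proof -
  have "cj x \<noteq> 0"
  proof
    assume "cj x = 0"
    hence "x = cj 0" using cj_cj[of x] by simp
    thus False using assms(1) by (simp add: cj_def)
  qed
  then obtain b where b: "P (cj x) b \<noteq> 0" using nondeg by blast
  define a where "a = x \<star> b"
  have ta: "tr a = P (cj x) b" unfolding a_def using C1[of x b e] by (simp add: P_sym)
  have na: "nrm a = 0" unfolding a_def using nmult[of x b] assms(2) by simp
  define r where "r = (1 / tr a) *s a"
  have tr_r: "tr r = 1" unfolding r_def using ta b by (simp add: P_scl_l)
  have n_r: "nrm r = 0" unfolding r_def using na by (simp add: n_scl)
  have "r \<star> r = r" using Q[of r] tr_r n_r by simp
  thus ?thesis using tr_r n_r by (auto simp: idem_def)
qed
end

locale twoloc = cayley scl mul e nrm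
  for scl :: "'a::field \<Rightarrow> 'v::ab_group_add \<Rightarrow> 'v" (infixr "*s" 75)
    and mul :: "'v \<Rightarrow> 'v \<Rightarrow> 'v" (infixl "\<star>" 70) and e :: 'v and nrm :: "'v \<Rightarrow> 'a" +
  fixes D :: "'v \<Rightarrow> 'v"
  assumes tl: "two_local_aut scl mul e D"
begin

lemma tl_obtain: obtains \<phi> where "\<phi> \<in> algebra_aut scl mul e" "D x = \<phi> x" "D y = \<phi> y"
  using tl unfolding two_local_aut_def by blast

lemma tl_P: "P (D x) (D y) = P x y"
proof -
  obtain \<phi> where a: "\<phi> \<in> algebra_aut scl mul e" "D x = \<phi> x" "D y = \<phi> y" by (rule tl_obtain)
  thus ?thesis using aut_P[OF a(1)] by simp
qed

lemma tl_n: "nrm (D x) = nrm x"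
proof -
  obtain \<phi> where a: "\<phi> \<in> algebra_aut scl mul e" "D x = \<phi> x" "D x = \<phi> x" by (rule tl_obtain)
  thus ?thesis using aut_n[OF a(1)] by simp
qed

lemma tl_rel: assumes "x \<star> y = a *s x + b *s y + c *s e"
  shows "D x \<star> D y = a *s D x + b *s D y + c *s e"
proof -
  obtain \<phi> where a: "\<phi> \<in> algebra_aut scl mul e" "D x = \<phi> x" "D y = \<phi> y" by (rule tl_obtain)
  have "\<phi> (x \<star> y) = \<phi> (a *s x + b *s y + c *s e)" using assms by simp
  thus ?thesis using a by (simp add: aut_D[OF a(1)])
qed

lemma tl_e: "D e = e"
proof -
  obtain \<phi> where a: "\<phi> \<in> algebra_aut scl mul e" "D e = \<phi> e" "D e = \<phi> e" by (rule tl_obtain)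
  thus ?thesis using aut_D(4)[OF a(1)] by simp
qed

lemma tl_inj: "inj D"
proof (rule injI)
  fix x y assume "D x = D y"
  hence "P x z = P y z" for z using tl_P[of x z] tl_P[of y z] by simp
  thus "x = y" by (rule eq_by_P)
qed

lemma basis: obtains B where "vs.independent B" "UNIV \<subseteq> vs.span B" "card B = 8" "finite B"
proof -
  obtain B where "B \<subseteq> UNIV" "vs.independent B" "UNIV \<subseteq> vs.span B" "card B = vs.dim UNIV"
    by (rule vs.basis_exists)
  moreover have "finite B" using \<open>card B = vs.dim UNIV\<close> dim8 by (intro card_ge_0_finite) simp
  ultimately show ?thesis using that dim8 by simp
qed

lemma image_indep: assumes B: "vs.independent B" "finite B" shows "vs.independent (D ` B)"
  unfolding vs.independent_explicit_finite_subsets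
proof (intro allI impI ballI)
  fix S u v assume S: "S \<subseteq> D ` B" "finite S" and sum0: "(\<Sum>v\<in>S. u v *s v) = 0" and v: "v \<in> S"
  define S' where "S' = {b \<in> B. D b \<in> S}"
  have SS: "D ` S' = S" using S(1) by (auto simp: S'_def)
  have injS: "inj_on D S'" using tl_inj by (auto simp: inj_on_def inj_def)
  have fS': "finite S'" using B(2) by (simp add: S'_def)
  have "(\<Sum>b\<in>S'. u (D b) *s D b) = (\<Sum>v\<in>D ` S'. u v *s v)"
    using sum.reindex[OF injS, of "\<lambda>v. u v *s v"] by (simp only: o_def)
  also have "\<dots> = 0" using SS sum0 by simp
  finally have "(\<Sum>b\<in>S'. u (D b) *s D b) = 0" .
  define y where "y = (\<Sum>b\<in>S'. u (D b) *s b)"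
  have "P y z = 0" for z
  proof -
    have "P y z = (\<Sum>b\<in>S'. u (D b) * P b z)" by (simp add: y_def P_sum_l P_scl_l)
    also have "\<dots> = (\<Sum>b\<in>S'. u (D b) * P (D b) (D z))" by (simp add: tl_P)
    also have "\<dots> = P (\<Sum>b\<in>S'. u (D b) *s D b) (D z)" by (simp add: P_sum_l P_scl_l)
    also have "\<dots> = 0" using \<open>(\<Sum>b\<in>S'. u (D b) *s D b) = 0\<close> by simp
    finally show ?thesis .
  qed
  hence "y = 0" by (rule nondeg)
  note ind' = B(1)[unfolded vs.independent_explicit_finite_subsets, rule_format]
  have "S' \<subseteq> B" by (auto simp: S'_def)
  have "\<forall>b\<in>S'. u (D b) = 0"
  proof
    fix b assume "b \<in> S'"
    show "u (D b) = 0"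
      by (rule ind'[OF \<open>S' \<subseteq> B\<close> fS', where u="\<lambda>b. u (D b)"])
        (use \<open>y = 0\<close> \<open>b \<in> S'\<close> in \<open>simp_all add: y_def\<close>)
  qed
  thus "u v = 0" using v SS by auto
qed

lemma image_span: obtains B where "finite B" "UNIV \<subseteq> vs.span (D ` B)"
proof -
  obtain B where B: "vs.independent B" "UNIV \<subseteq> vs.span B" "card B = 8" "finite B" by (rule basis)
  have ind: "vs.independent (D ` B)" by (rule image_indep[OF B(1) B(4)])
  have "inj_on D B" by (rule inj_on_subset[OF tl_inj]) simp
  hence cD: "card (D ` B) = 8" using B(3) by (simp add: card_image)
  obtain B2 where B2: "D ` B \<subseteq> B2" "B2 \<subseteq> UNIV" "vs.independent B2" "UNIV \<subseteq> vs.span B2"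
    by (rule vs.maximal_independent_subset_extend[OF subset_UNIV ind])
  have "card B2 = vs.dim UNIV" by (rule vs.basis_card_eq_dim[OF B2(2) B2(4) B2(3)])
  hence c2: "card B2 = 8" using dim8 by simp
  hence "finite B2" by (intro card_ge_0_finite) simp
  from card_subset_eq[OF this B2(1)] c2 cD have "D ` B = B2" by simp
  show ?thesis
  proof (rule that[OF B(4)])
    show "UNIV \<subseteq> vs.span (D ` B)" using B2(4) \<open>D ` B = B2\<close> by simp
  qed
qed

lemma perp_zero: assumes "\<And>y. P w (D y) = 0" shows "w = 0"
proof -
  obtain B where B: "finite B" "UNIV \<subseteq> vs.span (D ` B)" by (rule image_span)
  have sub: "vs.subspace {v. P w v = 0}"
    unfolding vs.subspace_def by (simp add: P_add_r P_scl_r)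
  have "vs.span (D ` B) \<subseteq> {v. P w v = 0}"
    by (rule vs.span_minimal[OF _ sub]) (use assms in auto)
  with B(2) have "P w v = 0" for v by auto
  thus ?thesis by (rule nondeg)
qed

lemma D_add: "D (x + y) = D x + D y"
proof -
  have "D (x + y) - D x - D y = 0"
    by (rule perp_zero) (simp add: P_diff_l tl_P P_add_l)
  thus ?thesis by (simp add: algebra_simps)
qed

lemma D_scl: "D (c *s x) = c *s D x"
proof -
  have "D (c *s x) - c *s D x = 0"
    by (rule perp_zero) (simp add: P_diff_l tl_P P_scl_l)
  thus ?thesis by simp
qed

lemma D_0[simp]: "D 0 = 0" using D_scl[of 0 0] by simp
lemma D_neg: "D (- x) = - D x" using D_scl[of "-1" x] by simp
lemma D_diff: "D (x - y) = D x - D y" using D_add[of x "-y"] by (simp add: D_neg)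

lemma D_linear: "Vector_Spaces.linear scl scl D"
  using cay unfolding cayley_algebra_def Vector_Spaces.linear_iff by (simp add: D_add D_scl)

lemma D_surj: "surj D"
proof -
  obtain B where B: "finite B" "UNIV \<subseteq> vs.span (D ` B)" by (rule image_span)
  have sub: "vs.subspace (range D)"
    unfolding vs.subspace_def
    by (auto simp: D_add[symmetric] D_scl[symmetric] intro: range_eqI[of _ D 0])
  have "vs.span (D ` B) \<subseteq> range D" by (rule vs.span_minimal[OF _ sub]) auto
  with B(2) show ?thesis by auto
qed


lemma D_rel: assumes "x \<star> y = 0 \<or> x \<star> y = x \<or> x \<star> y = y" shows "D (x \<star> y) = D x \<star> D y"
proof -
  consider "x \<star> y = 0" | "x \<star> y = x" | "x \<star> y = y" using assms by blast
  thus ?thesis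
  proof cases
    case 1
    hence "x \<star> y = 0 *s x + 0 *s y + 0 *s e" by simp
    from tl_rel[OF this] 1 show ?thesis by simp
  next
    case 2
    hence "x \<star> y = 1 *s x + 0 *s y + 0 *s e" by simp
    from tl_rel[OF this] 2 show ?thesis by simp
  next
    case 3
    hence "x \<star> y = 0 *s x + 1 *s y + 0 *s e" by simp
    from tl_rel[OF this] 3 show ?thesis by simp
  qed
qed

lemma UU: assumes r: "idem r" and u: "r \<star> u = u" "u \<star> r = 0" and w: "r \<star> w = w" "w \<star> r = 0"
  shows "D (u \<star> w) = D u \<star> D w"
proof -
  have h1: "(u \<star> w) \<star> r = u \<star> w" using RAlin[of u w r] u w by simp
  have h2: "(u \<star> w) \<star> w = 0" using RA[of u w] C12[OF r w] by simp
  have h3: "(u - u \<star> w) \<star> (r + w) = 0" using u h1 h2 by (simp add: mul_diff_l mul_add_r)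
  have "D (u - u \<star> w) \<star> D (r + w) = 0" using D_rel[of "u - u \<star> w" "r + w"] h3 by simp
  moreover have "D u \<star> D r = 0" using D_rel[of u r] u by simp
  moreover have "D (u \<star> w) \<star> D r = D (u \<star> w)" using D_rel[of "u \<star> w" r] h1 by simp
  moreover have "D (u \<star> w) \<star> D w = 0" using D_rel[of "u \<star> w" w] h2 by simp
  ultimately show ?thesis by (simp add: D_diff D_add mul_diff_l mul_add_r)
qed

lemma UV: assumes r: "idem r" and u: "r \<star> u = u" "u \<star> r = 0" and v: "r \<star> v = 0" "v \<star> r = v"
  shows "D (u \<star> v) = D u \<star> D v"
proof -
  note h = idemD[OF r]
  have a1: "r \<star> (u \<star> v) = u \<star> v" using LAlin[of r u v] u v by simp
  have a2: "(u \<star> v) \<star> r = u \<star> v" using RAlin[of u v r] u v by simp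
  define l where "l = tr (u \<star> v)"
  have uv: "u \<star> v = l *s r" unfolding l_def by (rule C11[OF r a1 a2])
  have rel: "(r + u) \<star> (v + l *s (e - r)) = l *s (r + u)"
    using u v h uv by (simp add: mul_add_l mul_add_r mul_scl_r mul_diff_r algebra_simps)
  have "D (r + u) \<star> D (v + l *s (e - r)) = l *s D (r + u)"
    using tl_rel[of "r + u" "v + l *s (e - r)" l 0 0] rel by simp
  hence eq: "(D r + D u) \<star> (D v + l *s (e - D r)) = l *s (D r + D u)"
    by (simp add: D_add D_scl D_diff tl_e)
  have f1: "D r \<star> D v = 0" using D_rel[of r v] v by simp
  have f2: "D r \<star> D r = D r" using D_rel[of r r] h by simp
  have f3: "D u \<star> D r = 0" using D_rel[of u r] u by simp
  from eq have "D u \<star> D v = l *s D r"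
    using f1 f2 f3 by (simp add: mul_add_l mul_add_r mul_scl_r mul_diff_r algebra_simps)
  thus ?thesis using uv by (simp add: D_scl)
qed

definition cls where "cls r y \<longleftrightarrow> y = r \<or> y = e - r \<or> (r \<star> y = y \<and> y \<star> r = 0) \<or> (r \<star> y = 0 \<and> y \<star> r = y)"

lemma right_ext: assumes r: "idem r" and H: "\<And>y. cls r y \<Longrightarrow> D (x \<star> y) = D x \<star> D y"
  shows "D (x \<star> z) = D x \<star> D z"
proof -
  obtain a b u v where z: "z = a *s r + b *s (e - r) + u + v"
    and u: "r \<star> u = u" "u \<star> r = 0" and v: "r \<star> v = 0" "v \<star> r = v" by (rule peirce[OF r])
  have 1: "D (x \<star> r) = D x \<star> D r" by (rule H) (simp add: cls_def)
  have 2: "D (x \<star> (e - r)) = D x \<star> D (e - r)" by (rule H) (simp add: cls_def)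
  have 3: "D (x \<star> u) = D x \<star> D u" by (rule H) (simp add: cls_def u)
  have 4: "D (x \<star> v) = D x \<star> D v" by (rule H) (simp add: cls_def v)
  have "D (x \<star> z) = a *s D (x \<star> r) + b *s D (x \<star> (e - r)) + D (x \<star> u) + D (x \<star> v)"
    by (simp add: z mul_add_r mul_scl_r D_add D_scl)
  also have "\<dots> = D x \<star> D z"
    by (simp add: 1 2 3 4 z mul_add_r mul_scl_r D_add D_scl)
  finally show ?thesis .
qed

lemma left_ext: assumes r: "idem r" and H: "\<And>x y. cls r x \<Longrightarrow> D (x \<star> y) = D x \<star> D y"
  shows "D (z \<star> y) = D z \<star> D y"
proof -
  obtain a b u v where z: "z = a *s r + b *s (e - r) + u + v"
    and u: "r \<star> u = u" "u \<star> r = 0" and v: "r \<star> v = 0" "v \<star> r = v" by (rule peirce[OF r])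
  have 1: "D (r \<star> y) = D r \<star> D y" by (rule H) (simp add: cls_def)
  have 2: "D ((e - r) \<star> y) = D (e - r) \<star> D y" by (rule H) (simp add: cls_def)
  have 3: "D (u \<star> y) = D u \<star> D y" by (rule H) (simp add: cls_def u)
  have 4: "D (v \<star> y) = D v \<star> D y" by (rule H) (simp add: cls_def v)
  have "D (z \<star> y) = a *s D (r \<star> y) + b *s D ((e - r) \<star> y) + D (u \<star> y) + D (v \<star> y)"
    by (simp add: z mul_add_l mul_scl_l D_add D_scl)
  also have "\<dots> = D z \<star> D y"
    by (simp add: 1 2 3 4 z mul_add_l mul_scl_l D_add D_scl)
  finally show ?thesis .
qed

lemma D_mult: assumes r: "idem r" shows "D (x \<star> y) = D x \<star> D y"
proof (rule left_ext[OF r])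
  fix x y assume x: "cls r x"
  note h = idemD[OF r]
  note q = idem_compl[OF r]
  note hq = idemD[OF q]
  have rq: "r \<star> (e - r) = 0" "(e - r) \<star> r = 0" using h by (simp_all add: mul_diff_l mul_diff_r)
  show "D (x \<star> y) = D x \<star> D y"
  proof (rule right_ext[OF r])
    fix y assume y: "cls r y"
    from x consider "x = r" | "x = e - r" | "r \<star> x = x \<and> x \<star> r = 0" | "r \<star> x = 0 \<and> x \<star> r = x"
      unfolding cls_def by blast
    thus "D (x \<star> y) = D x \<star> D y"
    proof cases
      case 1
      have "x \<star> y = 0 \<or> x \<star> y = x \<or> x \<star> y = y" using y 1 h rq unfolding cls_def by auto
      thus ?thesis by (rule D_rel)
    next
      case 2
      have "x \<star> y = 0 \<or> x \<star> y = x \<or> x \<star> y = y" using y 2 hq rq unfolding cls_def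
        by (auto simp: mul_diff_l)
      thus ?thesis by (rule D_rel)
    next
      case 3
      from y consider "y = r" | "y = e - r" | "r \<star> y = y \<and> y \<star> r = 0" | "r \<star> y = 0 \<and> y \<star> r = y"
        unfolding cls_def by blast
      thus ?thesis
      proof cases
        case 1 thus ?thesis using 3 by (intro D_rel) simp
      next
        case 2 thus ?thesis using 3 by (intro D_rel) (simp add: mul_diff_r)
      next
        case 3 thus ?thesis using \<open>r \<star> x = x \<and> x \<star> r = 0\<close> by (intro UU[OF r]) simp_all
      next
        case 4 thus ?thesis using \<open>r \<star> x = x \<and> x \<star> r = 0\<close> by (intro UV[OF r]) simp_all
      qed
    next
      case 4
      have xq: "(e - r) \<star> x = x" "x \<star> (e - r) = 0" using 4 by (simp_all add: mul_diff_l mul_diff_r)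
      from y consider "y = r" | "y = e - r" | "r \<star> y = y \<and> y \<star> r = 0" | "r \<star> y = 0 \<and> y \<star> r = y"
        unfolding cls_def by blast
      thus ?thesis
      proof cases
        case 1 thus ?thesis using 4 by (intro D_rel) simp
      next
        case 2 thus ?thesis using 4 by (intro D_rel) (simp add: mul_diff_r)
      next
        case 3
        have yq: "(e - r) \<star> y = 0" "y \<star> (e - r) = y" using 3 by (simp_all add: mul_diff_l mul_diff_r)
        show ?thesis by (rule UV[OF q xq yq])
      next
        case 4
        have yq: "(e - r) \<star> y = y" "y \<star> (e - r) = 0" using 4 by (simp_all add: mul_diff_l mul_diff_r)
        show ?thesis by (rule UU[OF q xq yq])
      qed
    qed
  qed
qed

end

theorem theorem4p3:
  fixes scl :: "'a::field \<Rightarrow> 'v::ab_group_add \<Rightarrow> 'v"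
    and mul :: "'v \<Rightarrow> 'v \<Rightarrow> 'v" and e :: 'v and nrm :: "'v \<Rightarrow> 'a"
  assumes "split_cayley_algebra scl mul e nrm"
  shows "{\<Delta>. two_local_aut scl mul e \<Delta>} = algebra_aut scl mul e"
proof -
  have cay: "cayley_algebra scl mul e nrm" and sp: "\<exists>x. x \<noteq> 0 \<and> nrm x = 0"
    using assms by (auto simp: split_cayley_algebra_def)
  interpret cayley scl mul e nrm by (rule cayley.intro[OF cay])
  obtain r where r: "idem r" using sp idem_exists by blast
  show ?thesis
  proof (intro set_eqI iffI)
    fix \<Delta> assume "\<Delta> \<in> {\<Delta>. two_local_aut scl mul e \<Delta>}"
    hence t: "two_local_aut scl mul e \<Delta>" by simp
    interpret twoloc scl mul e nrm \<Delta> by (rule twoloc.intro[OF cayley_axioms]) (rule twoloc_axioms.intro[OF t])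
    show "\<Delta> \<in> algebra_aut scl mul e"
      unfolding algebra_aut_def
      using D_linear tl_inj D_surj D_mult[OF r] tl_e by (simp add: bij_def)
  next
    fix \<phi> assume "\<phi> \<in> algebra_aut scl mul e"
    thus "\<phi> \<in> {\<Delta>. two_local_aut scl mul e \<Delta>}" unfolding two_local_aut_def by blast
  qed
qed

end
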